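(* For every integer $r \geq 3$ and every positive integer $n$, $$g'(r,n)\geq \frac{2n}{r+1}-\frac{\binom{2r}{r}}{r+1}.$$
   Context: A hypergraph is $r$-uniform if every edge contains exactly $r$ vertices. A matching is a set of pairwise vertex-disjoint edges. Given a collection (family, repetitions allowed) of matchings $M_1,\dots,M_n$ in a hypergraph (not necessarily disjoint from one another), a matching $M\subseteq \bigcup_{i=1}^n M_i$ is called rainbow if there is an injection $\phi:M\to[n]$ such that every edge $e\in M$ belongs to $M_{\phi(e)}$. $g'(r,n)$ denotes the largest integer $s$ such that every collection of $n$ matchings, each of size $n$, in an $r$-uniform hypergraph admits a rainbow matching of size $s$. *)

theory Defs
  imports Complex_Main
begin

text \<open>Hypergraphs on vertex type nat (every finite hypergraph embeds into nat).
  An edge is a set of vertices; a matching is a set of pairwise disjoint edges.\<close>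

definition is_matching :: "nat set set \<Rightarrow> bool" where
  "is_matching M \<longleftrightarrow> (\<forall>e\<in>M. \<forall>f\<in>M. e \<noteq> f \<longrightarrow> e \<inter> f = {})"

definition uniform :: "nat \<Rightarrow> nat set set \<Rightarrow> bool" where
  "uniform r E \<longleftrightarrow> (\<forall>e\<in>E. card e = r)"

definition has_rainbow_matching :: "nat \<Rightarrow> (nat \<Rightarrow> nat set set) \<Rightarrow> nat \<Rightarrow> bool" where
  "has_rainbow_matching n Ms s \<longleftrightarrow>
     (\<exists>M. M \<subseteq> (\<Union>i<n. Ms i) \<and> is_matching M \<and> finite M \<and> card M = s \<and>
        (\<exists>\<phi>. inj_on \<phi> M \<and> (\<forall>e\<in>M. \<phi> e < n \<and> e \<in> Ms (\<phi> e))))"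

definition g' :: "nat \<Rightarrow> nat \<Rightarrow> nat" where
  "g' r n = (GREATEST s. \<forall>Ms. (\<forall>i<n. is_matching (Ms i) \<and> finite (Ms i) \<and> card (Ms i) = n
                                      \<and> uniform r (Ms i))
                              \<longrightarrow> has_rainbow_matching n Ms s)"

end

theory Submission
  imports Defs
begin


lemma binom_id:
  assumes "b \<ge> 1"
  shows "real b * real ((a + b) choose a) = real (a + b) * real ((a + b - 1) choose a)"
proof -
  obtain c where c: "b = Suc c" using assms by (cases b) auto
  have "Suc c * ((a + Suc c) choose Suc c) = (a + Suc c) * ((a + Suc c - 1) choose c)"
    by (rule binomial_absorption)
  moreover have "(a + b) choose a = (a + b) choose b"
    using binomial_symmetric[of a "a+b"] by simp
  moreover have "(a + b - 1) choose a = (a + b - 1) choose c"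
    using binomial_symmetric[of a "a+b-1"] c by simp
  ultimately show ?thesis using c by (metis of_nat_mult)
qed

lemma bollobas_weighted:
  "finite X \<Longrightarrow> finite I \<Longrightarrow> (\<forall>i\<in>I. A i \<subseteq> X \<and> B i \<subseteq> X \<and> A i \<inter> B i = {}) \<Longrightarrow>
   (\<forall>i\<in>I. \<forall>j\<in>I. i \<noteq> j \<longrightarrow> A i \<inter> B j \<noteq> {}) \<Longrightarrow>
   (\<Sum>i\<in>I. 1 / real ((card (A i) + card (B i)) choose card (A i))) \<le> 1"
proof (induction "card X" arbitrary: X I B rule: less_induct)
  case less
  let ?w = "\<lambda>i. 1 / real ((card (A i) + card (B i)) choose card (A i))"
  show ?case
  proof (cases "\<exists>i\<in>I. B i = {}")
    case True
    then obtain i where i: "i \<in> I" "B i = {}" by blast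
    have "I = {i}" using i less.prems(4) by blast
    then show ?thesis using i by simp
  next
    case False
    show ?thesis
    proof (cases "I = {}")
      case True then show ?thesis by simp
    next
      case Ine: False
      then obtain i0 where "i0 \<in> I" by blast
      with False less.prems(3) have "X \<noteq> {}" by blast
      define N where "N = card X"
      have Npos: "N > 0" using \<open>X \<noteq> {}\<close> less.prems(1) N_def by (simp add: card_gt_0_iff)
      define w where "w = (\<lambda>i x. 1 / real ((card (A i) + card (B i - {x})) choose card (A i)))"
      have step: "(\<Sum>i\<in>{i\<in>I. x \<notin> A i}. w i x) \<le> 1" if x: "x \<in> X" for x
      proof -
        have "card (X - {x}) < card X" using x less.prems(1) by (meson card_Diff1_less)
        have fin: "finite (X - {x})" using less.prems(1) by simp
        have "(\<Sum>i\<in>{i\<in>I. x \<notin> A i}. 1 / real ((card (A i) + card ((\<lambda>i. B i - {x}) i)) choose card (A i))) \<le> 1"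
          apply (rule less.hyps[OF \<open>card (X - {x}) < card X\<close> fin])
          using less.prems apply auto[1] using less.prems by (auto, blast)
        then show ?thesis unfolding w_def by simp
      qed
      have "(\<Sum>x\<in>X. \<Sum>i\<in>{i\<in>I. x \<notin> A i}. w i x) \<le> (\<Sum>x\<in>X. 1)"
        by (rule sum_mono) (use step in auto)
      also have "\<dots> = real N" using N_def by simp
      finally have S1: "(\<Sum>x\<in>X. \<Sum>i\<in>{i\<in>I. x \<notin> A i}. w i x) \<le> real N" .
      have swap: "(\<Sum>x\<in>X. \<Sum>i\<in>{i\<in>I. x \<notin> A i}. w i x) = (\<Sum>i\<in>I. \<Sum>x\<in>{x\<in>X. x \<notin> A i}. w i x)"
        using sum.swap_restrict[OF less.prems(1) less.prems(2), of "\<lambda>x i. w i x" "\<lambda>x i. x \<notin> A i"]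
        by simp
      have each: "(\<Sum>x\<in>{x\<in>X. x \<notin> A i}. w i x) = real N * ?w i" if i: "i \<in> I" for i
      proof -
        define a where "a = card (A i)"
        define b where "b = card (B i)"
        have AX: "A i \<subseteq> X" and BX: "B i \<subseteq> X" and dis: "A i \<inter> B i = {}" using i less.prems(3) by auto
        have finA: "finite (A i)" and finB: "finite (B i)" using AX BX less.prems(1) finite_subset by auto
        have bpos: "b \<ge> 1" using False i finB b_def by (simp add: Suc_le_eq card_gt_0_iff)
        have split: "{x\<in>X. x \<notin> A i} = B i \<union> (X - (A i \<union> B i))" using BX dis by auto
        have s1: "(\<Sum>x\<in>B i. w i x) = real b / real ((a + b - 1) choose a)"
        proof -
          have "(\<Sum>x\<in>B i. w i x) = (\<Sum>x\<in>B i. 1 / real ((a + b - 1) choose a))"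
            by (rule sum.cong) (use bpos in \<open>auto simp: w_def a_def b_def finB\<close>)
          then show ?thesis by (simp add: b_def)
        qed
        have s2: "(\<Sum>x\<in>X - (A i \<union> B i). w i x) = real (N - (a + b)) / real ((a + b) choose a)"
        proof -
          have "(\<Sum>x\<in>X - (A i \<union> B i). w i x) = (\<Sum>x\<in>X - (A i \<union> B i). 1 / real ((a + b) choose a))"
            by (rule sum.cong) (auto simp: w_def a_def b_def)
          moreover have "card (X - (A i \<union> B i)) = N - (a + b)"
            using AX BX dis finA finB N_def a_def b_def less.prems(1)
            by (simp add: card_Diff_subset card_Un_disjoint)
          ultimately show ?thesis by simp
        qed
        have abN: "a + b \<le> N" using AX BX dis finA finB N_def a_def b_def less.prems(1)
          by (metis Un_least card_Un_disjoint card_mono)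
        have "(\<Sum>x\<in>{x\<in>X. x \<notin> A i}. w i x) = (\<Sum>x\<in>B i. w i x) + (\<Sum>x\<in>X - (A i \<union> B i). w i x)"
          unfolding split by (rule sum.union_disjoint) (use less.prems(1) finB in auto)
        also have "\<dots> = real b / real ((a + b - 1) choose a) + real (N - (a + b)) / real ((a + b) choose a)"
          using s1 s2 by simp
        also have "real b / real ((a + b - 1) choose a) = real (a + b) / real ((a + b) choose a)"
        proof -
          have p1: "real ((a + b - 1) choose a) > 0" using bpos by simp
          have p2: "real ((a + b) choose a) > 0" by simp
          show ?thesis using binom_id[OF bpos, of a] p1 p2 by (simp add: field_simps)
        qed
        also have "real (a + b) / real ((a + b) choose a) + real (N - (a + b)) / real ((a + b) choose a)
                   = real N / real ((a + b) choose a)"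
          using abN by (simp add: add_divide_distrib[symmetric] of_nat_diff)
        finally show ?thesis by (simp add: a_def b_def)
      qed
      have "real N * (\<Sum>i\<in>I. ?w i) = (\<Sum>i\<in>I. real N * ?w i)" by (simp add: sum_distrib_left)
      also have "\<dots> = (\<Sum>i\<in>I. \<Sum>x\<in>{x\<in>X. x \<notin> A i}. w i x)" using each by simp
      also have "\<dots> \<le> real N" using S1 swap by simp
      finally have "real N * (\<Sum>i\<in>I. ?w i) \<le> real N * 1" by simp
      then show ?thesis using Npos by simp
    qed
  qed
qed

lemma bollobas:
  assumes "finite I" "\<forall>i\<in>I. finite (A i) \<and> finite (B i) \<and> card (A i) = a \<and> card (B i) = b \<and> A i \<inter> B i = {}"
    "\<forall>i\<in>I. \<forall>j\<in>I. i \<noteq> j \<longrightarrow> A i \<inter> B j \<noteq> {}"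
  shows "card I \<le> (a + b) choose a"
proof -
  define X where "X = (\<Union>i\<in>I. A i \<union> B i)"
  have "finite X" using assms unfolding X_def by auto
  have "(\<Sum>i\<in>I. 1 / real ((card (A i) + card (B i)) choose card (A i))) \<le> 1"
    by (rule bollobas_weighted[OF \<open>finite X\<close> assms(1)]) (use assms in \<open>auto simp: X_def\<close>)
  moreover have "(\<Sum>i\<in>I. 1 / real ((card (A i) + card (B i)) choose card (A i))) = real (card I) / real ((a+b) choose a)"
    using assms(2) by simp
  ultimately have "real (card I) / real ((a+b) choose a) \<le> 1" by simp
  moreover have "real ((a+b) choose a) > 0" by simp
  ultimately have "real (card I) \<le> real ((a+b) choose a)" by (simp add: divide_le_eq)
  then show ?thesis by simp
qed


lemma arith_final:
  fixes n s r C :: nat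
  assumes "s \<le> n" "r \<ge> 1"
    and h: "2*(n-s)*(2*n) \<le> 2*(n-s)*((r+1)*s) + (r-1)*s*C"
  shows "2*n \<le> (r+1)*s + C"
proof (rule ccontr)
  assume neg: "\<not> 2*n \<le> (r+1)*s + C"
  define x where "x = int (2*n) - int ((r+1)*s)"
  have "int (2*n) > int ((r+1)*s + C)" using neg by linarith
  then have xC: "x > int C" using x_def by simp
  have k: "2 * int (n - s) = x + (int r - 1) * int s" using assms(1,2) x_def by (simp add: of_nat_diff algebra_simps)
  have h': "2 * int (n-s) * int (2*n) \<le> 2 * int (n-s) * int ((r+1)*s) + (int r - 1) * int s * int C"
  proof -
    have "int (2*(n-s)*(2*n)) \<le> int (2*(n-s)*((r+1)*s) + (r-1)*s*C)" using h by (simp only: of_nat_le_iff)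
    moreover have rr: "int (r-1) = int r - 1" using assms(2) by simp
    ultimately show ?thesis by (simp only: of_nat_mult of_nat_add rr of_nat_1 of_nat_numeral)
  qed
  have "2 * int (n-s) * x \<le> (int r - 1) * int s * int C" 
  proof -
    have "2*int(n-s)*x = 2*int(n-s)*int(2*n) - 2*int(n-s)*int((r+1)*s)" by (simp add: x_def right_diff_distrib)
    then show ?thesis using h' by linarith
  qed
  then have A: "(x + (int r - 1) * int s) * x \<le> (int r - 1) * int s * int C" using k by simp
  have rs: "(int r - 1) * int s \<ge> 0" using assms(2) by simp
  have "(x + (int r - 1) * int s) * x = x * x + ((int r - 1) * int s) * x" by (simp add: algebra_simps)
  moreover have "x * x > 0" using xC by simp
  moreover have "((int r - 1) * int s) * x \<ge> ((int r - 1) * int s) * int C"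
    using rs xC by (simp add: mult_left_mono)
  ultimately have "(x + (int r - 1) * int s) * x > (int r - 1) * int s * int C" by linarith
  with A show False by simp
qed

definition rainbow :: "nat \<Rightarrow> (nat \<Rightarrow> nat set set) \<Rightarrow> nat set set \<Rightarrow> (nat set \<Rightarrow> nat) \<Rightarrow> bool" where
  "rainbow n Ms M \<phi> \<longleftrightarrow> is_matching M \<and> finite M \<and> inj_on \<phi> M \<and> (\<forall>e\<in>M. \<phi> e < n \<and> e \<in> Ms (\<phi> e))"

definition valid :: "nat \<Rightarrow> nat \<Rightarrow> (nat \<Rightarrow> nat set set) \<Rightarrow> bool" where
  "valid r n Ms \<longleftrightarrow> (\<forall>i<n. is_matching (Ms i) \<and> finite (Ms i) \<and> card (Ms i) = n \<and> uniform r (Ms i))"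

lemma hrm_iff: "has_rainbow_matching n Ms s \<longleftrightarrow> (\<exists>M \<phi>. rainbow n Ms M \<phi> \<and> card M = s)"
  unfolding has_rainbow_matching_def rainbow_def by blast

lemma rainbow_card_le: "rainbow n Ms M \<phi> \<Longrightarrow> card M \<le> n"
proof -
  assume a: "rainbow n Ms M \<phi>"
  then have "card M = card (\<phi> ` M)" unfolding rainbow_def by (simp add: card_image)
  also have "\<dots> \<le> card {..<n}" by (rule card_mono) (use a in \<open>auto simp: rainbow_def\<close>)
  finally show ?thesis by simp
qed

lemma rainbow_subset:
  assumes "rainbow n Ms M \<phi>" "t \<le> card M"
  shows "\<exists>M'. rainbow n Ms M' \<phi> \<and> card M' = t"
proof -
  obtain T where T: "T \<subseteq> M" "card T = t" "finite T" using obtain_subset_with_card_n[OF assms(2)] by blast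
  have "rainbow n Ms T \<phi>" using assms(1) T unfolding rainbow_def is_matching_def
    by (auto intro: inj_on_subset)
  then show ?thesis using T by blast
qed

lemma valid_edge:
  assumes "valid r n Ms" "i < n" "f \<in> Ms i"
  shows "card f = r"
  using assms unfolding valid_def uniform_def by auto

lemma valid_disj:
  assumes "valid r n Ms" "i < n" "f \<in> Ms i" "g \<in> Ms i" "f \<noteq> g"
  shows "f \<inter> g = {}"
  using assms unfolding valid_def is_matching_def by auto

lemma valid_ne:
  assumes "valid r n Ms" "r \<ge> 1" "i < n" "f \<in> Ms i"
  shows "f \<noteq> {}" "finite f"
  using valid_edge[OF assms(1,3,4)] assms(2) by (auto intro: card_ge_0_finite)

lemma meet_le:
  assumes "valid r n Ms" "r \<ge> 1" "i < n" "finite e" "card e = r"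
  shows "card {f\<in>Ms i. f \<inter> e \<noteq> {}} \<le> r"
proof -
  let ?S = "{f\<in>Ms i. f \<inter> e \<noteq> {}}"
  let ?h = "\<lambda>f. SOME x. x \<in> f \<inter> e"
  have h: "?h f \<in> f \<inter> e" if "f \<in> ?S" for f 
  proof -
    from that obtain x where "x \<in> f \<inter> e" by auto
    then show ?thesis by (rule someI)
  qed
  have "inj_on ?h ?S"
  proof (rule inj_onI)
    fix f g assume fg: "f \<in> ?S" "g \<in> ?S" "?h f = ?h g"
    show "f = g"
    proof (rule ccontr)
      assume "f \<noteq> g"
      then have "f \<inter> g = {}" using valid_disj[OF assms(1,3)] fg by auto
      then show False using h[OF fg(1)] h[OF fg(2)] fg(3) by auto
    qed
  qed
  moreover have "?h ` ?S \<subseteq> e" using h by auto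
  ultimately have "card ?S \<le> card e" using card_inj_on_le assms(4) by blast
  then show ?thesis using assms(5) by simp
qed


definition hits :: "nat set set \<Rightarrow> nat set \<Rightarrow> nat set set" where
  "hits M f = {e\<in>M. f \<inter> e \<noteq> {}}"

definition Pv :: "(nat \<Rightarrow> nat set set) \<Rightarrow> nat set set \<Rightarrow> nat \<Rightarrow> nat set set" where
  "Pv Ms M u = {f\<in>Ms u. card (hits M f) = 1}"

definition mm :: "(nat \<Rightarrow> nat set set) \<Rightarrow> nat set set \<Rightarrow> nat set \<Rightarrow> nat \<Rightarrow> nat" where
  "mm Ms M e u = card {f\<in>Pv Ms M u. f \<inter> e \<noteq> {}}"

context
  fixes r n :: nat and Ms :: "nat \<Rightarrow> nat set set" and M :: "nat set set" and \<phi> :: "nat set \<Rightarrow> nat"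
  assumes V: "valid r n Ms" and r1: "r \<ge> 1" and R: "rainbow n Ms M \<phi>"
    and MX: "\<And>M' \<phi>'. rainbow n Ms M' \<phi>' \<Longrightarrow> card M' \<le> card M"
begin

lemma Mfin: "finite M" using R unfolding rainbow_def by auto

lemma Medge: "e \<in> M \<Longrightarrow> \<phi> e < n \<and> e \<in> Ms (\<phi> e)" using R unfolding rainbow_def by auto

lemma Mcard: "e \<in> M \<Longrightarrow> card e = r \<and> finite e \<and> e \<noteq> {}"
  using Medge valid_edge[OF V] valid_ne[OF V r1] by blast

lemma Mdisj: "e \<in> M \<Longrightarrow> e' \<in> M \<Longrightarrow> e \<noteq> e' \<Longrightarrow> e \<inter> e' = {}"
  using R unfolding rainbow_def is_matching_def by auto

lemma L1:
  assumes u: "u < n" "u \<notin> \<phi> ` M" and f: "f \<in> Ms u"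
  shows "f \<inter> \<Union>M \<noteq> {}"
proof
  assume dis: "f \<inter> \<Union>M = {}"
  have fne: "f \<noteq> {}" using valid_ne[OF V r1 u(1) f] by simp
  have fM: "f \<notin> M" using dis fne by blast
  let ?M' = "insert f M" and ?p = "\<phi>(f := u)"
  have "rainbow n Ms ?M' ?p"
    unfolding rainbow_def
  proof (intro conjI)
    show "is_matching ?M'" using R dis unfolding rainbow_def is_matching_def by blast
    show "finite ?M'" using Mfin by simp
    have "inj_on ?p M" using R fM unfolding rainbow_def by (metis fun_upd_other inj_on_cong)
    moreover have "?p f \<notin> ?p ` (M - {f})" using u fM by auto
    ultimately show "inj_on ?p ?M'" using fM by simp
    show "\<forall>e\<in>?M'. ?p e < n \<and> e \<in> Ms (?p e)" using R u f fM unfolding rainbow_def by auto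
  qed
  then have "card ?M' \<le> card M" by (rule MX)
  then show False using fM Mfin by simp
qed

lemma L5:
  assumes e: "e \<in> M" and u: "u < n" "u \<notin> \<phi> ` M" and u': "u' < n" "u' \<notin> \<phi> ` M" and uu: "u \<noteq> u'"
    and f: "f \<in> Ms u" and g: "g \<in> Ms u'"
    and fp: "\<forall>e'\<in>M. f \<inter> e' \<noteq> {} \<longrightarrow> e' = e" and gp: "\<forall>e'\<in>M. g \<inter> e' \<noteq> {} \<longrightarrow> e' = e"
  shows "f \<inter> g \<noteq> {}"
proof
  assume fg: "f \<inter> g = {}"
  have fne: "f \<noteq> {}" using valid_ne[OF V r1 u(1) f] by simp
  have gne: "g \<noteq> {}" using valid_ne[OF V r1 u'(1) g] by simp
  have fgne: "f \<noteq> g" using fg fne by auto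
  let ?M0 = "M - {e}"
  have fM: "f \<notin> ?M0" using fp fne by auto
  have gM: "g \<notin> ?M0" using gp gne by auto
  let ?M' = "insert f (insert g ?M0)" and ?p = "\<phi>(g := u', f := u)"
  have "rainbow n Ms ?M' ?p"
    unfolding rainbow_def
  proof (intro conjI)
    show "is_matching ?M'" using R fg fp gp unfolding rainbow_def is_matching_def
      by (metis (no_types, lifting) Int_commute DiffE insertE insertI1)
    show "finite ?M'" using Mfin by simp
    have i0: "inj_on ?p ?M0" using R fM gM unfolding rainbow_def
      by (smt (verit, ccfv_SIG) DiffD1 fun_upd_other inj_on_def)
    have "?p ` ?M0 = \<phi> ` ?M0" using fM gM by auto
    then have "?p g \<notin> ?p ` (?M0 - {g})" using u' fgne by auto
    with i0 have i1: "inj_on ?p (insert g ?M0)" by simp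
    have "?p ` (insert g ?M0) = insert u' (\<phi> ` ?M0)" using fM gM fgne by auto
    then have "?p f \<notin> ?p ` (insert g ?M0 - {f})" using u uu by auto
    with i1 show "inj_on ?p ?M'" by simp
    show "\<forall>x\<in>?M'. ?p x < n \<and> x \<in> Ms (?p x)" using R u u' f g fM gM fgne unfolding rainbow_def by auto
  qed
  then have "card ?M' \<le> card M" by (rule MX)
  moreover have "card ?M' = card M + 1"
  proof -
    have "card ?M0 = card M - 1" using e Mfin by simp
    moreover have "card M \<ge> 1" using e Mfin by (metis One_nat_def Suc_leI card_gt_0_iff empty_iff)
    ultimately show ?thesis using fM gM fgne Mfin by simp
  qed
  ultimately show False by simp
qed

lemma hits_fin: "finite (hits M f)" using Mfin unfolding hits_def by simp

lemma hits_ge1: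
  assumes "u < n" "u \<notin> \<phi> ` M" "f \<in> Ms u"
  shows "card (hits M f) \<ge> 1"
proof -
  have "hits M f \<noteq> {}" using L1[OF assms] unfolding hits_def by blast
  then show ?thesis using hits_fin by (simp add: Suc_le_eq card_gt_0_iff)
qed

lemma C2:
  assumes u: "u < n" "u \<notin> \<phi> ` M"
  shows "2*n \<le> r * card M + card (Pv Ms M u)"
proof -
  let ?F = "Ms u"
  have Ffin: "finite ?F" and Fc: "card ?F = n" using V u unfolding valid_def by auto
  have "(\<Sum>f\<in>?F. card (hits M f)) = (\<Sum>f\<in>?F. \<Sum>e\<in>{e\<in>M. f \<inter> e \<noteq> {}}. 1)"
    unfolding hits_def by simp
  also have "\<dots> = (\<Sum>e\<in>M. \<Sum>f\<in>{f\<in>?F. f \<inter> e \<noteq> {}}. 1)"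
    by (rule sum.swap_restrict[OF Ffin Mfin])
  also have "\<dots> = (\<Sum>e\<in>M. card {f\<in>?F. f \<inter> e \<noteq> {}})" by simp
  also have "\<dots> \<le> (\<Sum>e\<in>M. r)"
    by (rule sum_mono) (use meet_le[OF V r1 u(1)] Mcard in auto)
  finally have up: "(\<Sum>f\<in>?F. card (hits M f)) \<le> r * card M" by (simp add: mult.commute)
  have low: "(\<Sum>f\<in>?F. (if card (hits M f) = 1 then 1 else 2)) \<le> (\<Sum>f\<in>?F. card (hits M f))"
  proof (rule sum_mono)
    fix f assume "f \<in> ?F"
    then have "card (hits M f) \<ge> 1" using hits_ge1 u by blast
    then show "(if card (hits M f) = 1 then 1 else 2) \<le> card (hits M f)" by auto
  qed
  have "card (Pv Ms M u) = (\<Sum>f\<in>?F. (if card (hits M f) = 1 then 1 else 0))"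
    unfolding Pv_def using Ffin by (simp add: sum.If_cases Int_def conj_commute)
  then have "(\<Sum>f\<in>?F. (if card (hits M f) = 1 then 1 else 2)) + card (Pv Ms M u)
      = (\<Sum>f\<in>?F. ((if card (hits M f) = 1 then 1 else 2) + (if card (hits M f) = 1 then 1 else 0)))"
    by (simp add: sum.distrib)
  also have "\<dots> = (\<Sum>f\<in>?F. 2)" by (rule sum.cong) auto
  also have "\<dots> = 2 * n" using Fc by simp
  finally show ?thesis using up low by linarith
qed

lemma C3:
  assumes u: "u < n" "u \<notin> \<phi> ` M"
  shows "card (Pv Ms M u) \<le> card M + (r - 1) * card {e\<in>M. mm Ms M e u \<ge> 2}"
proof -
  let ?P = "Pv Ms M u"
  have Pfin: "finite ?P" using V u unfolding valid_def Pv_def by auto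
  have "card ?P = (\<Sum>f\<in>?P. card (hits M f))" unfolding Pv_def by simp
  also have "\<dots> = (\<Sum>f\<in>?P. \<Sum>e\<in>{e\<in>M. f \<inter> e \<noteq> {}}. 1)"
    unfolding hits_def by simp
  also have "\<dots> = (\<Sum>e\<in>M. \<Sum>f\<in>{f\<in>?P. f \<inter> e \<noteq> {}}. 1)"
    by (rule sum.swap_restrict[OF Pfin Mfin])
  also have "\<dots> = (\<Sum>e\<in>M. mm Ms M e u)" unfolding mm_def by simp
  also have "\<dots> \<le> (\<Sum>e\<in>M. 1 + (r - 1) * (if mm Ms M e u \<ge> 2 then 1 else 0))"
  proof (rule sum_mono)
    fix e assume e: "e \<in> M"
    have "mm Ms M e u \<le> card {f\<in>Ms u. f \<inter> e \<noteq> {}}"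
      unfolding mm_def Pv_def by (rule card_mono) (use V u in \<open>auto simp: valid_def\<close>)
    also have "\<dots> \<le> r" using meet_le[OF V r1 u(1)] Mcard[OF e] by auto
    finally show "mm Ms M e u \<le> 1 + (r - 1) * (if mm Ms M e u \<ge> 2 then 1 else 0)" by auto
  qed
  also have "\<dots> = card M + (r - 1) * (\<Sum>e\<in>M. (if mm Ms M e u \<ge> 2 then 1 else 0))"
    by (simp only: sum.distrib sum_distrib_left) simp
  also have "(\<Sum>e\<in>M. (if mm Ms M e u \<ge> 2 then 1 else 0)) = card {e\<in>M. mm Ms M e u \<ge> 2}"
    using Mfin by (simp add: sum.If_cases Int_def conj_commute)
  finally show ?thesis .
qed

lemma priv_unique:
  assumes "f \<in> Pv Ms M u" "e \<in> M" "f \<inter> e \<noteq> {}"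
  shows "\<forall>e'\<in>M. f \<inter> e' \<noteq> {} \<longrightarrow> e' = e"
proof -
  have c: "card (hits M f) = 1" using assms(1) unfolding Pv_def by simp
  have "e \<in> hits M f" using assms unfolding hits_def by simp
  obtain x where x: "hits M f = {x}" using c by (rule card_1_singletonE)
  show ?thesis
  proof (intro ballI impI)
    fix e' assume "e' \<in> M" "f \<inter> e' \<noteq> {}"
    then have "e' \<in> hits M f" unfolding hits_def by simp
    then show "e' = e" using x \<open>e \<in> hits M f\<close> by simp
  qed
qed

lemma C6:
  assumes e: "e \<in> M"
  shows "2 * card {u\<in>{..<n} - \<phi> ` M. mm Ms M e u \<ge> 2} \<le> (2*r) choose r"
proof -
  define W where "W = {u\<in>{..<n} - \<phi> ` M. mm Ms M e u \<ge> 2}"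
  define S where "S = (\<lambda>u. {f\<in>Pv Ms M u. f \<inter> e \<noteq> {}})"
  have "\<forall>u\<in>W. \<exists>p. fst p \<in> S u \<and> snd p \<in> S u \<and> fst p \<noteq> snd p"
  proof
    fix u assume "u \<in> W"
    then have "2 \<le> card (S u)" unfolding W_def S_def mm_def by simp
    then obtain T where T: "T \<subseteq> S u" "card T = 2" using obtain_subset_with_card_n by metis
    then obtain a b where "T = {a, b}" "a \<noteq> b" using card_2_iff by metis
    then show "\<exists>p. fst p \<in> S u \<and> snd p \<in> S u \<and> fst p \<noteq> snd p" using T
      by (intro exI[of _ "(a,b)"]) auto
  qed
  then obtain AB where AB: "\<forall>u\<in>W. fst (AB u) \<in> S u \<and> snd (AB u) \<in> S u \<and> fst (AB u) \<noteq> snd (AB u)"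
    by metis
  define A where "A = (\<lambda>(u, b::bool). if b then fst (AB u) else snd (AB u))"
  define B where "B = (\<lambda>(u, b::bool). if b then snd (AB u) else fst (AB u))"
  define I where "I = W \<times> (UNIV :: bool set)"
  have Wfin: "finite W" unfolding W_def by simp
  have Wn: "u \<in> W \<Longrightarrow> u < n \<and> u \<notin> \<phi> ` M" for u unfolding W_def by auto
  have Sin: "f \<in> S u \<Longrightarrow> f \<in> Ms u \<and> f \<in> Pv Ms M u \<and> f \<inter> e \<noteq> {}" for f u
    unfolding S_def Pv_def by auto
  have AS: "i \<in> I \<Longrightarrow> A i \<in> S (fst i) \<and> B i \<in> S (fst i) \<and> A i \<noteq> B i" for i
    using AB unfolding I_def A_def B_def by (cases i) auto
  have "card I \<le> (r + r) choose r"
  proof (rule bollobas)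
    show "finite I" unfolding I_def using Wfin by simp
    show "\<forall>i\<in>I. finite (A i) \<and> finite (B i) \<and> card (A i) = r \<and> card (B i) = r \<and> A i \<inter> B i = {}"
    proof
      fix i assume i: "i \<in> I"
      then have u: "fst i < n" using Wn unfolding I_def by auto
      have a: "A i \<in> Ms (fst i)" and b: "B i \<in> Ms (fst i)" using AS[OF i] Sin by auto
      show "finite (A i) \<and> finite (B i) \<and> card (A i) = r \<and> card (B i) = r \<and> A i \<inter> B i = {}"
        using valid_ne[OF V r1 u a] valid_ne[OF V r1 u b] valid_edge[OF V u a] valid_edge[OF V u b]
          valid_disj[OF V u a b] AS[OF i] by auto
    qed
    show "\<forall>i\<in>I. \<forall>j\<in>I. i \<noteq> j \<longrightarrow> A i \<inter> B j \<noteq> {}"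
    proof (intro ballI impI)
      fix i j assume i: "i \<in> I" and j: "j \<in> I" and ij: "i \<noteq> j"
      obtain u b where ub: "i = (u, b)" by (cases i)
      obtain u' b' where ub': "j = (u', b')" by (cases j)
      show "A i \<inter> B j \<noteq> {}"
      proof (cases "u = u'")
        case True
        then have "b' = (\<not> b)" using ij ub ub' by auto
        then have "B j = A i" using ub ub' True unfolding A_def B_def by auto
        moreover have "A i \<noteq> {}"
        proof -
          have u: "u < n" using i ub Wn unfolding I_def by auto
          have "A i \<in> Ms u" using AS[OF i] Sin ub by auto
          then show ?thesis using valid_ne[OF V r1 u] by auto
        qed
        ultimately show ?thesis by simp
      next
        case False
        have uW: "u \<in> W" and uW': "u' \<in> W" using i j ub ub' unfolding I_def by auto
        have a: "A i \<in> S u" using AS[OF i] ub by auto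
        have b: "B j \<in> S u'" using AS[OF j] ub' by auto
        show ?thesis
          apply (rule L5[OF e _ _ _ _ False])
          using Wn[OF uW] Wn[OF uW'] Sin[OF a] Sin[OF b] priv_unique[OF _ e] by auto
      qed
    qed
  qed
  moreover have "card I = 2 * card W" unfolding I_def by (simp add: card_cartesian_product)
  ultimately show ?thesis unfolding W_def by (simp add: mult_2)
qed

lemma main_ineq: "2 * n \<le> (r + 1) * card M + ((2*r) choose r)"
proof -
  define U where "U = {..<n} - \<phi> ` M"
  define s where "s = card M"
  define C where "C = (2*r) choose r"
  define w where "w = (\<lambda>u. card {e\<in>M. mm Ms M e u \<ge> 2})"
  have Ufin: "finite U" unfolding U_def by simp
  have sn: "s \<le> n" using rainbow_card_le[OF R] s_def by simp
  have cU: "card U = n - s"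
  proof -
    have "\<phi> ` M \<subseteq> {..<n}" using Medge by auto
    moreover have "card (\<phi> ` M) = s" using R s_def unfolding rainbow_def by (simp add: card_image)
    ultimately show ?thesis unfolding U_def by (simp add: card_Diff_subset Mfin)
  qed
  have each: "2 * n \<le> (r + 1) * s + (r - 1) * w u" if u: "u \<in> U" for u
    using C2[of u] C3[of u] u unfolding U_def w_def s_def by auto
  have "(\<Sum>u\<in>U. 2 * n) \<le> (\<Sum>u\<in>U. (r + 1) * s + (r - 1) * w u)"
    by (rule sum_mono) (rule each)
  then have S1: "card U * (2 * n) \<le> card U * ((r + 1) * s) + (r - 1) * (\<Sum>u\<in>U. w u)"
    by (simp add: sum.distrib sum_distrib_left)
  have "(\<Sum>u\<in>U. w u) = (\<Sum>u\<in>U. \<Sum>e\<in>{e\<in>M. mm Ms M e u \<ge> 2}. 1)" unfolding w_def by simp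
  also have "\<dots> = (\<Sum>e\<in>M. \<Sum>u\<in>{u\<in>U. mm Ms M e u \<ge> 2}. 1)"
    by (rule sum.swap_restrict[OF Ufin Mfin])
  also have "\<dots> = (\<Sum>e\<in>M. card {u\<in>U. mm Ms M e u \<ge> 2})" by simp
  finally have "2 * (\<Sum>u\<in>U. w u) = (\<Sum>e\<in>M. 2 * card {u\<in>U. mm Ms M e u \<ge> 2})"
    by (simp add: sum_distrib_left)
  also have "\<dots> \<le> (\<Sum>e\<in>M. C)"
    by (rule sum_mono) (use C6 in \<open>auto simp: U_def C_def\<close>)
  finally have S2: "2 * (\<Sum>u\<in>U. w u) \<le> s * C" using s_def by simp
  have "2 * (n - s) * (2 * n) \<le> 2 * (n - s) * ((r + 1) * s) + (r - 1) * s * C"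
  proof -
    define K where "K = n - s"
    define T where "T = (\<Sum>u\<in>U. w u)"
    define q where "q = r - 1"
    have S1': "K * (2 * n) \<le> K * ((r + 1) * s) + q * T" using S1 cU unfolding K_def T_def q_def by simp
    have "2 * K * (2 * n) \<le> 2 * K * ((r + 1) * s) + q * (2 * T)"
      using S1' by (simp add: algebra_simps)
    also have "q * (2 * T) \<le> q * (s * C)" using S2 unfolding T_def by simp
    finally have "2 * K * (2 * n) \<le> 2 * K * ((r + 1) * s) + q * (s * C)" by simp
    then show ?thesis unfolding K_def q_def by (simp add: mult.assoc)
  qed
  from arith_final[OF sn r1 this] show ?thesis unfolding s_def C_def .
qed

end



lemma interval_disj:
  fixes j j' r :: nat
  assumes "j \<noteq> j'"
  shows "{j*r..<j*r+r} \<inter> {j'*r..<j'*r+r} = {}"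
proof -
  { fix a b :: nat assume "a < b"
    then have "Suc a * r \<le> b * r" by (intro mult_le_mono1) simp
    then have "a*r + r \<le> b*r" by simp
    then have "{a*r..<a*r+r} \<inter> {b*r..<b*r+r} = {}" by auto }
  note * = this
  show ?thesis using assms *[of j j'] *[of j' j] by (cases "j < j'") (auto simp: Int_commute)
qed

lemma valid_exists:
  assumes "r \<ge> 1"
  shows "valid r n (\<lambda>i. (\<lambda>j. {j*r..<j*r+r}) ` {..<n})"
proof -
  let ?F = "(\<lambda>j. {j*r..<j*r+r}) ` {..<n}"
  have inj: "inj_on (\<lambda>j. {j*r..<j*r+r}) {..<n}"
  proof (rule inj_onI)
    fix j j' assume "j \<in> {..<n}" "j' \<in> {..<n}" "{j*r..<j*r+r} = {j'*r..<j'*r+r}"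
    moreover have "j*r \<in> {j*r..<j*r+r}" using assms by simp
    ultimately show "j = j'" using interval_disj[of j j' r] by blast
  qed
  have "is_matching ?F" unfolding is_matching_def
  proof (intro ballI impI)
    fix e f assume "e \<in> ?F" "f \<in> ?F" "e \<noteq> f"
    then obtain j j' where "e = {j*r..<j*r+r}" "f = {j'*r..<j'*r+r}" "j \<noteq> j'" by blast
    then show "e \<inter> f = {}" using interval_disj by simp
  qed
  moreover have "card ?F = n" using card_image[OF inj] by simp
  moreover have "uniform r ?F" unfolding uniform_def by auto
  ultimately show ?thesis unfolding valid_def by auto
qed

theorem theorem1p6:
  fixes r n :: nat
  assumes "r \<ge> 3" and "n \<ge> 1"
  shows "real (g' r n) \<ge> 2 * real n / (real r + 1) - real (2 * r choose r) / (real r + 1)"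
proof -
  have r1: "r \<ge> 1" using assms by simp
  define C where "C = (2 * r) choose r"
  define P where "P = (\<lambda>s. \<forall>Ms. (\<forall>i<n. is_matching (Ms i) \<and> finite (Ms i) \<and> card (Ms i) = n
                                      \<and> uniform r (Ms i)) \<longrightarrow> has_rainbow_matching n Ms s)"
  have gP: "g' r n = Greatest P" unfolding g'_def P_def ..
  have Pv: "P s \<longleftrightarrow> (\<forall>Ms. valid r n Ms \<longrightarrow> (\<exists>M \<phi>. rainbow n Ms M \<phi> \<and> card M = s))" for s
    unfolding P_def valid_def hrm_iff ..
  have bound: "y \<le> n" if "P y" for y
  proof -
    from that valid_exists[OF r1, of n] obtain M \<phi> where "rainbow n (\<lambda>i. (\<lambda>j. {j*r..<j*r+r}) ` {..<n}) M \<phi>" "card M = y"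
      unfolding Pv by blast
    then show ?thesis using rainbow_card_le by blast
  qed
  define b where "b = 2 * real n / (real r + 1) - real C / (real r + 1)"
  define t where "t = nat \<lceil>b\<rceil>"
  have Pt: "P t" unfolding Pv
  proof (intro allI impI)
    fix Ms assume V: "valid r n Ms"
    define Sz where "Sz = {card M | M. \<exists>\<phi>. rainbow n Ms M \<phi>}"
    have "Sz \<subseteq> {..n}" unfolding Sz_def using rainbow_card_le by auto
    then have Szf: "finite Sz" using finite_subset by blast
    have "rainbow n Ms {} \<phi>" for \<phi> unfolding rainbow_def is_matching_def by simp
    then have "0 \<in> Sz" unfolding Sz_def by force
    then have "Max Sz \<in> Sz" using Szf by (metis Max_in empty_iff)
    then obtain M \<phi> where R: "rainbow n Ms M \<phi>" and cM: "card M = Max Sz" unfolding Sz_def by auto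
    have MX: "card M' \<le> card M" if "rainbow n Ms M' \<phi>'" for M' \<phi>'
    proof -
      have "card M' \<in> Sz" unfolding Sz_def using that by blast
      then show ?thesis using cM Szf by simp
    qed
    have ineq: "2 * n \<le> (r + 1) * card M + C" unfolding C_def by (rule main_ineq[OF V r1 R]) (rule MX)
    have "b \<le> real (card M)"
    proof -
      have "2 * real n \<le> (real r + 1) * real (card M) + real C"
      proof -
        have "real (2 * n) \<le> real ((r + 1) * card M + C)" using ineq by (simp only: of_nat_le_iff)
        then show ?thesis by (simp add: algebra_simps)
      qed
      then have "2 * real n - real C \<le> real (card M) * (real r + 1)" by (simp add: algebra_simps)
      then show ?thesis unfolding b_def by (simp add: diff_divide_distrib[symmetric] divide_le_eq)
    qed
    then have "t \<le> card M" unfolding t_def by (simp add: ceiling_le_iff nat_le_iff)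
    then show "\<exists>M \<phi>. rainbow n Ms M \<phi> \<and> card M = t" using rainbow_subset[OF R] by blast
  qed
  have "t \<le> Greatest P" using Pt bound by (rule Greatest_le_nat)
  then have "real t \<le> real (g' r n)" using gP by simp
  moreover have "b \<le> real t" unfolding t_def by linarith
  ultimately show ?thesis unfolding b_def C_def by simp
qed

end
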